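(* Let $p \ge 1$ be an integer. The functions $\overline{\Delta}_{\mathrm{JML1}}$ and $\overline{\Delta}_{\mathrm{JML2}}$ (defined below) are both metrics on $[0,1]^p$. Neither $\overline{\Delta}_{\mathrm{SJL},L^1}$ nor $\overline{\Delta}_{\mathrm{SJL},L^2}$ (defined below) is a metric on $[0,1]^p$.
   Context: For $x,y \in [0,1]^p$ write $\|x\|_1=\sum_{i=1}^p |x_i|$, $\|x\|_2^2=\sum_{i=1}^p x_i^2$ and $\langle x,y\rangle=\sum_{i=1}^p x_iy_i$. Define, for $x,y\in[0,1]^p$: $\overline{\Delta}_{\mathrm{JML1}}(x,y) = 1 - \frac{\|x\|_1+\|y\|_1-\|x-y\|_1}{\|x\|_1+\|y\|_1+\|x-y\|_1}$, $\overline{\Delta}_{\mathrm{JML2}}(x,y) = 1 - \frac{\langle x,y\rangle}{\langle x,y\rangle+\|x-y\|_1}$, $\overline{\Delta}_{\mathrm{SJL},L^1}(x,y) = 1 - \frac{\langle x,y\rangle}{\|x\|_1+\|y\|_1-\langle x,y\rangle}$, $\overline{\Delta}_{\mathrm{SJL},L^2}(x,y) = 1 - \frac{\langle x,y\rangle}{\|x\|_2^2+\|y\|_2^2-\langle x,y\rangle}$. All these denominators vanish only when $x=y=0$; by convention each of these functions takes the value $0$ at $(x,y)=(0,0)$. A mapping $f: M\times M\to\mathbb{R}$ is a metric on $M$ if for all $a,b,c\in M$: $f(a,a)=0$; $a\neq b \Rightarrow f(a,b)>0$; $f(a,b)=f(b,a)$; and $f(a,c)\le f(a,b)+f(b,c)$.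 *)

theory Defs
  imports "HOL-Analysis.Analysis"
begin

text \<open>Points of [0,1]^p are modelled as vectors of type real^'n with a finite
index type 'n of cardinality p (every type is nonempty, so p >= 1).\<close>

definition unit_cube :: "(real ^ 'n) set" where
  "unit_cube = {x. \<forall>i. 0 \<le> x $ i \<and> x $ i \<le> 1}"

definition norm1 :: "real ^ 'n \<Rightarrow> real" where
  "norm1 x = (\<Sum>i\<in>UNIV. \<bar>x $ i\<bar>)"

definition sqnorm2 :: "real ^ 'n \<Rightarrow> real" where
  "sqnorm2 x = (\<Sum>i\<in>UNIV. (x $ i)^2)"

definition ip :: "real ^ 'n \<Rightarrow> real ^ 'n \<Rightarrow> real" where
  "ip x y = (\<Sum>i\<in>UNIV. x $ i * y $ i)"

definition dJML1 :: "real ^ 'n \<Rightarrow> real ^ 'n \<Rightarrow> real" where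
  "dJML1 x y = (if x = 0 \<and> y = 0 then 0 else
     1 - (norm1 x + norm1 y - norm1 (x - y)) / (norm1 x + norm1 y + norm1 (x - y)))"

definition dJML2 :: "real ^ 'n \<Rightarrow> real ^ 'n \<Rightarrow> real" where
  "dJML2 x y = (if x = 0 \<and> y = 0 then 0 else
     1 - ip x y / (ip x y + norm1 (x - y)))"

definition dSJL1 :: "real ^ 'n \<Rightarrow> real ^ 'n \<Rightarrow> real" where
  "dSJL1 x y = (if x = 0 \<and> y = 0 then 0 else
     1 - ip x y / (norm1 x + norm1 y - ip x y))"

definition dSJL2 :: "real ^ 'n \<Rightarrow> real ^ 'n \<Rightarrow> real" where
  "dSJL2 x y = (if x = 0 \<and> y = 0 then 0 else
     1 - ip x y / (sqnorm2 x + sqnorm2 y - ip x y))"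

definition is_metric_on :: "'a set \<Rightarrow> ('a \<Rightarrow> 'a \<Rightarrow> real) \<Rightarrow> bool" where
  "is_metric_on M f \<longleftrightarrow>
     (\<forall>a\<in>M. f a a = 0) \<and>
     (\<forall>a\<in>M. \<forall>b\<in>M. a \<noteq> b \<longrightarrow> f a b > 0) \<and>
     (\<forall>a\<in>M. \<forall>b\<in>M. f a b = f b a) \<and>
     (\<forall>a\<in>M. \<forall>b\<in>M. \<forall>c\<in>M. f a c \<le> f a b + f b c)"

end

theory Submission
  imports Defs
begin
lemma key:
  fixes a b c p q r :: real
  assumes "0\<le>a" "0\<le>b" "0\<le>c" "0\<le>p" "0\<le>q" "0\<le>r" "c \<le> a+b" "p - b \<le> r" "q - a \<le> r"
  shows "c/(c+r) \<le> a/(a+p) + b/(b+q)"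
proof -
  have m: "c/(c+r) \<le> (a+b)/(a+b+r)"
  proof (cases "c+r = 0")
    case True then show ?thesis using assms by simp
  next
    case False
    then have "c+r>0" using assms by linarith
    have "r*c \<le> r*(a+b)" using assms by (simp add: mult_left_mono)
    then show ?thesis using assms \<open>c+r>0\<close> by (simp add: divide_simps algebra_simps)
  qed
  have "(a+b)/(a+b+r) = a/(a+b+r) + b/(a+b+r)" by (simp add: add_divide_distrib)
  also have "a/(a+b+r) \<le> a/(a+p)"
    using assms by (cases "a=0") (auto intro!: divide_left_mono)
  also have "b/(a+b+r) \<le> b/(b+q)"
    using assms by (cases "b=0") (auto intro!: divide_left_mono)
  finally show ?thesis using m by linarith
qed

lemma metric_from:
  fixes M :: "'a set" and f d s :: "'a \<Rightarrow> 'a \<Rightarrow> real"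
  assumes f: "\<And>x y. x\<in>M \<Longrightarrow> y\<in>M \<Longrightarrow> f x y = d x y / (d x y + s x y)"
    and dn: "\<And>x y. x\<in>M \<Longrightarrow> y\<in>M \<Longrightarrow> 0 \<le> d x y"
    and sn: "\<And>x y. x\<in>M \<Longrightarrow> y\<in>M \<Longrightarrow> 0 \<le> s x y"
    and ds: "\<And>x y. x\<in>M \<Longrightarrow> y\<in>M \<Longrightarrow> d x y = d y x"
    and ss: "\<And>x y. x\<in>M \<Longrightarrow> y\<in>M \<Longrightarrow> s x y = s y x"
    and d0: "\<And>x. x\<in>M \<Longrightarrow> d x x = 0"
    and dp: "\<And>x y. x\<in>M \<Longrightarrow> y\<in>M \<Longrightarrow> x \<noteq> y \<Longrightarrow> 0 < d x y"
    and dt: "\<And>x y z. x\<in>M \<Longrightarrow> y\<in>M \<Longrightarrow> z\<in>M \<Longrightarrow> d x z \<le> d x y + d y z"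
    and st: "\<And>x y z. x\<in>M \<Longrightarrow> y\<in>M \<Longrightarrow> z\<in>M \<Longrightarrow> s x y - d y z \<le> s x z"
  shows "is_metric_on M f"
  unfolding is_metric_on_def
proof (intro conjI ballI impI)
  fix a assume "a\<in>M" then show "f a a = 0" using f d0 by simp
next
  fix a b assume "a\<in>M" "b\<in>M" "a\<noteq>b"
  then show "f a b > 0" using f dp sn by (simp add: add_pos_nonneg)
next
  fix a b assume "a\<in>M" "b\<in>M"
  then show "f a b = f b a" using f ds ss by simp
next
  fix a b c assume M: "a\<in>M" "b\<in>M" "c\<in>M"
  have "d a c / (d a c + s a c) \<le> d a b / (d a b + s a b) + d b c / (d b c + s b c)"
  proof (rule key)
    show "s b c - d a b \<le> s a c"
      using st[of c b a] M ds ss by simp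
  qed (use M dn sn dt st in auto)
  then show "f a c \<le> f a b + f b c" using f M by simp
qed

lemma cube_nonneg: "x \<in> unit_cube \<Longrightarrow> 0 \<le> x $ i" and cube_le1: "x \<in> unit_cube \<Longrightarrow> x $ i \<le> 1"
  by (auto simp: unit_cube_def)

lemma norm1_zero[simp]: "norm1 0 = 0" by (simp add: norm1_def)

lemma norm1_nonneg: "0 \<le> norm1 x" by (simp add: norm1_def sum_nonneg)

lemma norm1_pos: "x \<noteq> y \<Longrightarrow> 0 < norm1 (x - y)"
proof -
  assume "x \<noteq> y"
  then obtain i where "x $ i \<noteq> y $ i" by (auto simp: vec_eq_iff)
  then have "0 < \<bar>(x - y) $ i\<bar>" by simp
  also have "\<dots> \<le> norm1 (x - y)" unfolding norm1_def
    by (rule member_le_sum) auto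
  finally show ?thesis .
qed

lemma norm1_tri: "norm1 (x - z) \<le> norm1 (x - y) + norm1 (y - z)"
  unfolding norm1_def sum.distrib[symmetric] by (rule sum_mono) simp

lemma norm1_sym: "norm1 (x - y) = norm1 (y - x)"
  unfolding norm1_def by (simp add: abs_minus_commute)

definition smin :: "real ^ 'n \<Rightarrow> real ^ 'n \<Rightarrow> real" where
  "smin x y = (\<Sum>i\<in>UNIV. min (x $ i) (y $ i))"

lemma JML1_eq:
  assumes "x \<in> unit_cube" "y \<in> unit_cube"
  shows "dJML1 x y = norm1 (x - y) / (norm1 (x - y) + smin x y)"
proof (cases "x = 0 \<and> y = 0")
  case True then show ?thesis by (simp add: dJML1_def norm1_def smin_def)
next
  case False
  have nx: "\<And>i. 0 \<le> x $ i" and ny: "\<And>i. 0 \<le> y $ i" using assms cube_nonneg by auto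
  have e1: "norm1 x + norm1 y - norm1 (x - y) = 2 * smin x y"
    using nx ny unfolding norm1_def smin_def sum_distrib_left sum.distrib[symmetric] sum_subtractf[symmetric]
    by (intro sum.cong) (auto simp: min_def abs_if nx ny not_less[symmetric])
  have e2: "norm1 x + norm1 y + norm1 (x - y) = 2 * (norm1 (x - y) + smin x y)"
    using e1 by simp
  have pos: "norm1 (x - y) + smin x y \<noteq> 0"
  proof
    assume z: "norm1 (x - y) + smin x y = 0"
    have "norm1 (x - y) + smin x y = (\<Sum>i\<in>UNIV. max (x $ i) (y $ i))"
      unfolding norm1_def smin_def sum.distrib[symmetric]
      by (intro sum.cong) (auto simp: min_def max_def)
    with z have "\<forall>i. max (x $ i) (y $ i) = 0"
      using sum_nonneg_eq_0_iff[of UNIV "\<lambda>i. max (x $ i) (y $ i)"] assms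
      by (auto simp: cube_nonneg max.coboundedI1)
    then have "x = 0 \<and> y = 0" using assms
      by (auto simp: vec_eq_iff cube_nonneg max_def split: if_splits)
         (metis cube_nonneg order_antisym)+
    with False show False by simp
  qed
  show ?thesis using False pos unfolding dJML1_def e1 e2
    by (auto simp: divide_simps)
qed

lemma JML2_eq:
  assumes "x \<in> unit_cube" "y \<in> unit_cube"
  shows "dJML2 x y = norm1 (x - y) / (norm1 (x - y) + ip x y)"
proof (cases "x = 0 \<and> y = 0")
  case True then show ?thesis by (simp add: dJML2_def norm1_def ip_def)
next
  case False
  have nx: "\<And>i. 0 \<le> x $ i" and ny: "\<And>i. 0 \<le> y $ i" using assms cube_nonneg by auto
  have pos: "norm1 (x - y) + ip x y \<noteq> 0"
  proof
    assume z: "norm1 (x - y) + ip x y = 0"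
    have "norm1 (x - y) + ip x y = (\<Sum>i\<in>UNIV. \<bar>x $ i - y $ i\<bar> + x $ i * y $ i)"
      unfolding norm1_def ip_def sum.distrib[symmetric] by simp
    with z have "\<forall>i. \<bar>x $ i - y $ i\<bar> + x $ i * y $ i = 0"
      using sum_nonneg_eq_0_iff[of UNIV "\<lambda>i. \<bar>x $ i - y $ i\<bar> + x $ i * y $ i"] nx ny
      by auto
    have "x $ i = 0 \<and> y $ i = 0" for i
    proof -
      have h: "\<bar>x $ i - y $ i\<bar> + x $ i * y $ i = 0" using \<open>\<forall>i. _\<close> by blast
      have "0 \<le> x $ i * y $ i" using nx ny by simp
      then have "\<bar>x $ i - y $ i\<bar> = 0" "x $ i * y $ i = 0" using h by linarith+
      then show ?thesis by auto
    qed
    then have "x = 0 \<and> y = 0" by (auto simp: vec_eq_iff)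
    with False show False by simp
  qed
  show ?thesis using False pos unfolding dJML2_def
    by (auto simp: divide_simps)
qed

lemma smin_nonneg: "x \<in> unit_cube \<Longrightarrow> y \<in> unit_cube \<Longrightarrow> 0 \<le> smin x y"
  unfolding smin_def by (intro sum_nonneg) (simp add: cube_nonneg)

lemma smin_tri: "smin x y - norm1 (y - z) \<le> smin x z"
  unfolding smin_def norm1_def sum_subtractf[symmetric] by (rule sum_mono) (auto simp: min_def)

lemma ip_nonneg: "x \<in> unit_cube \<Longrightarrow> y \<in> unit_cube \<Longrightarrow> 0 \<le> ip x y"
  unfolding ip_def by (intro sum_nonneg) (simp add: cube_nonneg)

lemma ip_tri:
  assumes "x \<in> unit_cube"
  shows "ip x y - norm1 (y - z) \<le> ip x z"
  unfolding ip_def norm1_def sum_subtractf[symmetric]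
proof (rule sum_mono)
  fix i
  have a: "0 \<le> x $ i" "x $ i \<le> 1" using assms cube_nonneg cube_le1 by auto
  have "x $ i * (y $ i - z $ i) \<le> x $ i * \<bar>y $ i - z $ i\<bar>"
    using a by (intro mult_left_mono) auto
  also have "\<dots> \<le> 1 * \<bar>y $ i - z $ i\<bar>" using a by (intro mult_right_mono) auto
  finally show "x $ i * y $ i - \<bar>(y - z) $ i\<bar> \<le> x $ i * z $ i"
    by (simp add: algebra_simps)
qed

lemma vec_cube: "0 \<le> c \<Longrightarrow> c \<le> 1 \<Longrightarrow> (vec c :: real ^ 'n) \<in> unit_cube"
  by (simp add: unit_cube_def)

theorem theorem1:
  shows "is_metric_on (unit_cube :: (real ^ 'n) set) dJML1 \<and>
         is_metric_on (unit_cube :: (real ^ 'n) set) dJML2 \<and>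
         \<not> is_metric_on (unit_cube :: (real ^ 'n) set) dSJL1 \<and>
         \<not> is_metric_on (unit_cube :: (real ^ 'n) set) dSJL2"
proof (intro conjI)
  show "is_metric_on (unit_cube :: (real ^ 'n) set) dJML1"
    by (rule metric_from[where d = "\<lambda>x y. norm1 (x - y)" and s = smin])
       (simp_all add: JML1_eq norm1_nonneg smin_nonneg norm1_pos norm1_tri smin_tri,
        rule norm1_sym, simp add: smin_def min.commute)
  show "is_metric_on (unit_cube :: (real ^ 'n) set) dJML2"
    by (rule metric_from[where d = "\<lambda>x y. norm1 (x - y)" and s = ip])
       (simp_all add: JML2_eq norm1_nonneg ip_nonneg norm1_pos norm1_tri ip_tri,
        rule norm1_sym, simp add: ip_def mult.commute)
  define n where "n = real CARD('n)"
  have n: "n > 0" by (simp add: n_def)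
  show "\<not> is_metric_on (unit_cube :: (real ^ 'n) set) dSJL1"
  proof
    assume "is_metric_on (unit_cube :: (real ^ 'n) set) dSJL1"
    then have "dSJL1 (vec (1/2) :: real ^ 'n) (vec (1/2)) = 0"
      unfolding is_metric_on_def using vec_cube[of "1/2"] by auto
    moreover have "dSJL1 (vec (1/2) :: real ^ 'n) (vec (1/2)) = 2/3"
      using n by (simp add: dSJL1_def norm1_def ip_def vec_eq_iff n_def[symmetric] divide_simps)
    ultimately show False by simp
  qed
  show "\<not> is_metric_on (unit_cube :: (real ^ 'n) set) dSJL2"
  proof
    assume "is_metric_on (unit_cube :: (real ^ 'n) set) dSJL2"
    then have "dSJL2 (vec 1 :: real ^ 'n) (vec (1/4)) \<le> dSJL2 (vec 1 :: real ^ 'n) (vec (1/2)) + dSJL2 (vec (1/2) :: real ^ 'n) (vec (1/4))"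
    proof -
      have c1: "(vec 1 :: real ^ 'n) \<in> unit_cube" by (rule vec_cube) auto
      have c2: "(vec (1/2) :: real ^ 'n) \<in> unit_cube" by (rule vec_cube) auto
      have c3: "(vec (1/4) :: real ^ 'n) \<in> unit_cube" by (rule vec_cube) auto
      show ?thesis using \<open>is_metric_on unit_cube dSJL2\<close> c1 c2 c3 unfolding is_metric_on_def by blast
    qed
    moreover have "dSJL2 (vec 1 :: real ^ 'n) (vec (1/4)) = 9/13"
      using n by (simp add: dSJL2_def sqnorm2_def ip_def vec_eq_iff n_def[symmetric] divide_simps)
    moreover have "dSJL2 (vec 1 :: real ^ 'n) (vec (1/2)) = 1/3"
      using n by (simp add: dSJL2_def sqnorm2_def ip_def vec_eq_iff n_def[symmetric] divide_simps)
    moreover have "dSJL2 (vec (1/2) :: real ^ 'n) (vec (1/4)) = 1/3"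
      using n by (simp add: dSJL2_def sqnorm2_def ip_def vec_eq_iff n_def[symmetric] divide_simps)
    ultimately show False by simp
  qed
qed
end
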